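(* Let $k$ be a field, $U$ a three-dimensional $k$-vector space, and $\phi_3\in D_3U^*$. Assume (a) either the characteristic of $k$ is not two, or the characteristic of $k$ is two but $\phi_3\neq x^*y^*z^*$ for every basis $x^*,y^*,z^*$ of $U^*$; and (b) $\ell\phi_3\neq0$ for every nonzero $\ell\in U$. Then $\Gamma_{\phi_3}:D_3U\otimes\bigwedge^3U\to\bigwedge^3U^*$ is not identically zero.
   Context: $U^*=\operatorname{Hom}_k(U,k)$, $D_iU^*=\operatorname{Hom}_k(\operatorname{Sym}_iU,k)$; $D_\bullet U^*$ is the divided power algebra, a module over $\operatorname{Sym}_\bullet U$ via $(uv)(u')=v(uu')$. For a basis $x,y,z$ of $U$ with dual basis $x^*,y^*,z^*$, $x^*y^*z^*$ is the element of $D_3U^*$ taking value $1$ on $xyz$ and $0$ on all other cubic monomials. $D_3U$ is the degree-$3$ divided power of $U$; for $X\in D_3U$, $\Delta(X)\in U^{\otimes3}$ is its comultiplication (for $X=\ell_1^{(e_1)}\cdots\ell_s^{(e_s)}$ with $\sum e_j=3$, the sum of all distinct words $u_1\otimes u_2\otimes u_3$ in which the symbol $\ell_j$ occurs exactly $e_j$ times, extended linearly). $\Gamma_{\phi_3}(X\otimes y_1\wedge y_2\wedge y_3)=\sum(u_1y_1\phi_3)\wedge(u_2y_2\phi_3)\wedge(u_3y_3\phi_3)$, summed over the terms of $\Delta(X)$, with $u_iy_i\in\operatorname{Sym}_2U$ acting on $\phi_3$ to give elements of $U^*$. *)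

theory Defs
  imports "HOL-Analysis.Analysis"
begin

text \<open>Coordinates: U = k^3 with standard basis e_1,e_2,e_3 (axis t 1); U^* is identified
with k^3 via coordinates w.r.t. the dual basis, i.e. f \<mapsto> (f(e_1),f(e_2),f(e_3)).
A cubic monomial of Sym_3 U (resp. divided power monomial of D_3 U) is recorded by its
exponent function 3 => nat.\<close>

definition mono3 :: "3 \<Rightarrow> 3 \<Rightarrow> 3 \<Rightarrow> (3 \<Rightarrow> nat)" where
  "mono3 i j k = (\<lambda>t. of_bool (i = t) + of_bool (j = t) + of_bool (k = t))"

text \<open>An element phi of D_3 U^* = Hom(Sym_3 U, k) is given by its values phi m on the cubic
monomials m = e_1^a e_2^b e_3^c (exponent functions with sum 3).  sym3_eval phi u v w is
the value of phi on the product u v w in Sym_3 U.\<close>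

definition sym3_eval :: "((3 \<Rightarrow> nat) \<Rightarrow> 'a::field) \<Rightarrow> 'a^3 \<Rightarrow> 'a^3 \<Rightarrow> 'a^3 \<Rightarrow> 'a" where
  "sym3_eval phi u v w =
     (\<Sum>i\<in>UNIV. \<Sum>j\<in>UNIV. \<Sum>k\<in>UNIV. u$i * v$j * w$k * phi (mono3 i j k))"

text \<open>The element l phi of D_2 U^* (for l in U), given by its values on the quadratic
monomials e_i e_j: (l phi)(e_i e_j) = phi(l e_i e_j).\<close>

definition act1 :: "((3 \<Rightarrow> nat) \<Rightarrow> 'a::field) \<Rightarrow> 'a^3 \<Rightarrow> (3 \<Rightarrow> 3 \<Rightarrow> 'a)" where
  "act1 phi l = (\<lambda>i j. sym3_eval phi l (axis i 1) (axis j 1))"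

text \<open>The element (u v) phi of U^* (for u v in Sym_2 U), in dual coordinates.\<close>

definition act2 :: "((3 \<Rightarrow> nat) \<Rightarrow> 'a::field) \<Rightarrow> 'a^3 \<Rightarrow> 'a^3 \<Rightarrow> 'a^3" where
  "act2 phi u v = (\<chi> t. sym3_eval phi u v (axis t 1))"

text \<open>phi = x^* y^* z^* for some basis x^*,y^*,z^* of U^*, expressed through the dual basis
x,y,z of U (rows of the invertible matrix b): phi takes value 1 on xyz and 0 on all other
cubic monomials in x,y,z.\<close>

definition is_xyz :: "((3 \<Rightarrow> nat) \<Rightarrow> 'a::field) \<Rightarrow> bool" where
  "is_xyz phi \<longleftrightarrow> (\<exists>b :: 'a^3^3. det b \<noteq> 0 \<and>
      sym3_eval phi (b$1) (b$2) (b$3) = 1 \<and>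
      (\<forall>p q r. (p = q \<or> q = r \<or> p = r) \<longrightarrow> sym3_eval phi (b$p) (b$q) (b$r) = 0))"

text \<open>Comultiplication: for X in D_3 U, given by its coefficients X m on the divided power
monomials e_1^(a) e_2^(b) e_3^(c), the coefficient of e_i \<otimes> e_j \<otimes> e_k in Delta(X).\<close>

definition Delta3 :: "((3 \<Rightarrow> nat) \<Rightarrow> 'a::field) \<Rightarrow> 3 \<Rightarrow> 3 \<Rightarrow> 3 \<Rightarrow> 'a" where
  "Delta3 X i j k = X (mono3 i j k)"

text \<open>Gamma_phi(X \<otimes> y1\<and>y2\<and>y3) in \<And>^3 U^*, written as its coordinate w.r.t. the basis
e_1^*\<and>e_2^*\<and>e_3^* (alpha\<and>beta\<and>gamma has coordinate det[alpha;beta;gamma]).\<close>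

definition Gamma :: "((3 \<Rightarrow> nat) \<Rightarrow> 'a::field) \<Rightarrow> ((3 \<Rightarrow> nat) \<Rightarrow> 'a) \<Rightarrow> 'a^3 \<Rightarrow> 'a^3 \<Rightarrow> 'a^3 \<Rightarrow> 'a" where
  "Gamma phi X y1 y2 y3 =
     (\<Sum>i\<in>UNIV. \<Sum>j\<in>UNIV. \<Sum>k\<in>UNIV. Delta3 X i j k *
        det (vector [act2 phi (axis i 1) y1, act2 phi (axis j 1) y2, act2 phi (axis k 1) y3] :: 'a^3^3))"

end

theory Submission
  imports Defs
begin

lemma mono3_sym: "mono3 i j k = mono3 j i k" "mono3 i j k = mono3 i k j"
  by (auto simp: mono3_def fun_eq_iff)

lemma F_sym12: "sym3_eval phi u v w = sym3_eval phi v u w"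
  unfolding sym3_eval_def
  by (subst sum.swap) (simp add: mono3_sym(1)[of _ _] mult_ac)

lemma F_sym23: "sym3_eval phi u v w = sym3_eval phi u w v"
proof -
  have "\<And>i. (\<Sum>j\<in>UNIV. \<Sum>k\<in>UNIV. u$i * v$j * w$k * phi (mono3 i j k)) =
             (\<Sum>k\<in>UNIV. \<Sum>j\<in>UNIV. u$i * v$j * w$k * phi (mono3 i j k))"
    by (rule sum.swap)
  then show ?thesis unfolding sym3_eval_def
    by (simp add: mono3_sym(2)[of _ _] mult_ac)
qed

lemma F_add1: "sym3_eval phi (u + u') v w = sym3_eval phi u v w + sym3_eval phi u' v w"
  unfolding sym3_eval_def by (simp add: distrib_right sum.distrib)
lemma F_smult1: "sym3_eval phi (c *s u) v w = c * sym3_eval phi u v w"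
  unfolding sym3_eval_def by (simp add: sum_distrib_left mult_ac)
lemma F_diff1: "sym3_eval phi (u - u') v w = sym3_eval phi u v w - sym3_eval phi u' v w"
  unfolding sym3_eval_def by (simp add: left_diff_distrib sum_subtractf)
lemma F_add2: "sym3_eval phi v (u + u') w = sym3_eval phi v u w + sym3_eval phi v u' w"
  by (metis F_add1 F_sym12)
lemma F_smult2: "sym3_eval phi v (c *s u) w = c * sym3_eval phi v u w"
  by (metis F_smult1 F_sym12)
lemma F_diff2: "sym3_eval phi v (u - u') w = sym3_eval phi v u w - sym3_eval phi v u' w"
  by (metis F_diff1 F_sym12)
lemma F_add3: "sym3_eval phi v w (u + u') = sym3_eval phi v w u + sym3_eval phi v w u'"
  by (metis F_add2 F_sym23)
lemma F_smult3: "sym3_eval phi v w (c *s u) = c * sym3_eval phi v w u"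
  by (metis F_smult2 F_sym23)
lemma F_diff3: "sym3_eval phi v w (u - u') = sym3_eval phi v w u - sym3_eval phi v w u'"
  by (metis F_diff2 F_sym23)

lemma vec3_decomp: "(u::'a::field^3) = u$1 *s axis 1 1 + u$2 *s axis 2 1 + u$3 *s axis 3 1"
  by (simp add: vec_eq_iff forall_3 axis_def)

lemma F_exp1: "sym3_eval phi u v w = u$1 * sym3_eval phi (axis 1 1) v w + u$2 * sym3_eval phi (axis 2 1) v w
   + u$3 * sym3_eval phi (axis 3 1) v w"
  by (subst vec3_decomp[of u]) (simp add: F_add1 F_smult1)
lemma F_exp3: "sym3_eval phi v w u = u$1 * sym3_eval phi v w (axis 1 1) + u$2 * sym3_eval phi v w (axis 2 1)
   + u$3 * sym3_eval phi v w (axis 3 1)"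
  by (subst vec3_decomp[of u]) (simp add: F_add3 F_smult3)

lemma pair_eq:
  assumes "\<And>t. of_bool (j = t) + of_bool (k = t) = (of_bool (b = t) + of_bool (c = t) :: nat)"
  shows "(b = j \<and> c = k) \<or> (b = k \<and> c = j)"
proof -
  have "b = j \<or> b = k" using assms[of b] by (cases "j = b"; cases "k = b"; simp)
  then show ?thesis
  proof
    assume "b = j"
    have "of_bool (k = t) = (of_bool (c = t) :: nat)" for t using assms[of t, unfolded \<open>b = j\<close>] by simp
    from this[of k] \<open>b = j\<close> show ?thesis by (auto split: if_splits)
  next
    assume "b = k"
    have "of_bool (j = t) = (of_bool (c = t) :: nat)" for t using assms[of t, unfolded \<open>b = k\<close>] by simp
    from this[of j] \<open>b = k\<close> show ?thesis by (auto split: if_splits)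
  qed
qed

lemma mono3_eq_perm:
  assumes "mono3 i j k = mono3 a b c"
  shows "(a=i \<and> b=j \<and> c=k) \<or> (a=i \<and> b=k \<and> c=j) \<or> (a=j \<and> b=i \<and> c=k) \<or> (a=j \<and> b=k \<and> c=i) \<or> (a=k \<and> b=i \<and> c=j) \<or> (a=k \<and> b=j \<and> c=i)"
proof -
  have e: "\<And>t. of_bool (i = t) + of_bool (j = t) + of_bool (k = t) = (of_bool (a = t) + of_bool (b = t) + of_bool (c = t) :: nat)"
    using assms unfolding mono3_def by metis
  have "a = i \<or> a = j \<or> a = k" using e[of a] by (cases "i = a"; cases "j = a"; cases "k = a"; simp)
  then show ?thesis
  proof (elim disjE)
    assume "a = i"
    have "of_bool (j = t) + of_bool (k = t) = (of_bool (b = t) + of_bool (c = t) :: nat)" for t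
      using e[of t, unfolded \<open>a = i\<close>] by simp
    from pair_eq[OF this] \<open>a = i\<close> show ?thesis by blast
  next
    assume "a = j"
    have "of_bool (i = t) + of_bool (k = t) = (of_bool (b = t) + of_bool (c = t) :: nat)" for t
      using e[of t, unfolded \<open>a = j\<close>] by simp
    from pair_eq[OF this] \<open>a = j\<close> show ?thesis by blast
  next
    assume "a = k"
    have "of_bool (i = t) + of_bool (j = t) = (of_bool (b = t) + of_bool (c = t) :: nat)" for t
      using e[of t, unfolded \<open>a = k\<close>] by simp
    from pair_eq[OF this] \<open>a = k\<close> show ?thesis by blast
  qed
qed

lemma sym_fun:
  assumes s1: "\<And>i j k. h i j k = h j i k" and s2: "\<And>i j k. h i j k = h i k j"
  shows "\<exists>X. \<forall>i j k. X (mono3 i j k) = h i j k"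
proof -
  define X where "X m = (let t = SOME t. mono3 (fst t) (fst (snd t)) (snd (snd t)) = m
      in h (fst t) (fst (snd t)) (snd (snd t)))" for m
  have "X (mono3 i j k) = h i j k" for i j k
  proof -
    define t where "t = (SOME t. mono3 (fst t) (fst (snd t)) (snd (snd t)) = mono3 i j k)"
    have "mono3 (fst t) (fst (snd t)) (snd (snd t)) = mono3 i j k"
      unfolding t_def by (rule someI[of _ "(i,j,k)"]) simp
    from mono3_eq_perm[OF this[symmetric]]
    have "h (fst t) (fst (snd t)) (snd (snd t)) = h i j k"
      by (elim disjE conjE; metis s1 s2)
    then show ?thesis unfolding X_def t_def[symmetric] by simp
  qed
  then show ?thesis by blast
qed


definition tau :: "'a::field^3 \<Rightarrow> 'a^3 \<Rightarrow> 'a^3 \<Rightarrow> 'a" where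
  "tau r1 r2 r3 = r1$1 * r2$2 * r3$3 + r1$2 * r2$3 * r3$1 + r1$3 * r2$1 * r3$2
     - r1$1 * r2$3 * r3$2 - r1$2 * r2$1 * r3$3 - r1$3 * r2$2 * r3$1"

lemma det_vec3: "det (vector [r1, r2, r3] :: 'a::field^3^3) = tau r1 r2 r3"
  by (simp add: det_3 tau_def)

definition Dd where
  "Dd phi a b c y1 y2 y3 = tau (act2 phi a y1) (act2 phi b y2) (act2 phi c y3)"

lemma Gamma_Dd: "Gamma phi X y1 y2 y3 =
  (\<Sum>i\<in>UNIV. \<Sum>j\<in>UNIV. \<Sum>k\<in>UNIV. X (mono3 i j k) * Dd phi (axis i 1) (axis j 1) (axis k 1) y1 y2 y3)"
  unfolding Gamma_def Delta3_def Dd_def det_vec3 ..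

lemma act2_exp: "act2 phi a y = a$1 *s act2 phi (axis 1 1) y + a$2 *s act2 phi (axis 2 1) y + a$3 *s act2 phi (axis 3 1) y"
  unfolding act2_def by (simp add: vec_eq_iff F_exp1[of phi a])

lemma tau_lin:
  "tau (u + v) r s = tau u r s + tau v r s"
  "tau r (u + v) s = tau r u s + tau r v s"
  "tau r s (u + v) = tau r s u + tau r s v"
  "tau (c *s u) r s = c * tau u r s"
  "tau r (c *s u) s = c * tau r u s"
  "tau r s (c *s u) = c * tau r s u"
  by (simp_all add: tau_def algebra_simps)

lemma Dd_exp: "Dd phi a b c y1 y2 y3 =
  (\<Sum>i\<in>UNIV. \<Sum>j\<in>UNIV. \<Sum>k\<in>UNIV. a$i * b$j * c$k * Dd phi (axis i 1) (axis j 1) (axis k 1) y1 y2 y3)"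
  unfolding Dd_def
  apply (subst act2_exp[of phi a]) apply (subst act2_exp[of phi b]) apply (subst act2_exp[of phi c])
  by (simp add: tau_lin sum_3 algebra_simps)

context
  fixes phi :: "(3 \<Rightarrow> nat) \<Rightarrow> 'a::field"
  assumes Z: "\<forall>X y1 y2 y3. Gamma phi X y1 y2 y3 = 0"
begin

lemma symsum:
  assumes s1: "\<And>i j k. h i j k = h j i k" and s2: "\<And>i j k. h i j k = h i k j"
  shows "(\<Sum>i\<in>UNIV. \<Sum>j\<in>UNIV. \<Sum>k\<in>UNIV. h i j k * Dd phi (axis i 1) (axis j 1) (axis k 1) y1 y2 y3) = 0"
proof -
  obtain X where X: "\<And>i j k. X (mono3 i j k) = h i j k" using sym_fun[of h] s1 s2 by blast
  show ?thesis using Z Gamma_Dd[of phi X y1 y2 y3] by (simp add: X)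
qed

lemma W1: "Dd phi a a a y1 y2 y3 = 0"
  using symsum[of "\<lambda>i j k. a$i * a$j * a$k" y1 y2 y3] unfolding Dd_exp[of phi a a a]
  by (simp add: mult_ac)

lemma W2: "Dd phi a a b y1 y2 y3 + Dd phi a b a y1 y2 y3 + Dd phi b a a y1 y2 y3 = 0"
proof -
  have "(\<Sum>i\<in>UNIV. \<Sum>j\<in>UNIV. \<Sum>k\<in>UNIV. (a$i * a$j * b$k + a$i * b$j * a$k + b$i * a$j * a$k)
     * Dd phi (axis i 1) (axis j 1) (axis k 1) y1 y2 y3) = 0"
    by (rule symsum) (simp_all add: algebra_simps)
  then show ?thesis
    unfolding Dd_exp[of phi a a b] Dd_exp[of phi a b a] Dd_exp[of phi b a a]
    by (simp add: distrib_right sum.distrib)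
qed

lemma W3: "Dd phi a b c y1 y2 y3 + Dd phi a c b y1 y2 y3 + Dd phi b a c y1 y2 y3
   + Dd phi b c a y1 y2 y3 + Dd phi c a b y1 y2 y3 + Dd phi c b a y1 y2 y3 = 0"
proof -
  have "(\<Sum>i\<in>UNIV. \<Sum>j\<in>UNIV. \<Sum>k\<in>UNIV. (a$i * b$j * c$k + a$i * c$j * b$k + b$i * a$j * c$k
      + b$i * c$j * a$k + c$i * a$j * b$k + c$i * b$j * a$k)
     * Dd phi (axis i 1) (axis j 1) (axis k 1) y1 y2 y3) = 0"
    by (rule symsum) (simp_all add: algebra_simps)
  then show ?thesis
    unfolding Dd_exp[of phi a b c] Dd_exp[of phi a c b] Dd_exp[of phi b a c]
      Dd_exp[of phi b c a] Dd_exp[of phi c a b] Dd_exp[of phi c b a]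
    by (simp add: distrib_right sum.distrib)
qed

end

definition cps :: "'a::field \<Rightarrow> 'a \<Rightarrow> 'a \<Rightarrow> 'a \<Rightarrow> 'a \<Rightarrow> 'a \<Rightarrow> 'a \<Rightarrow> 'a \<Rightarrow> 'a \<Rightarrow> 'a \<Rightarrow> bool" where
  "cps q300 q210 q201 q120 q111 q102 q030 q021 q012 q003 \<longleftrightarrow>
    (q102 * q120 * q300 - q102 * q210 * q210 - q111 * q111 * q300 + 2 * q111 * q201 * q210 - q120 * q201 * q201) = 0 \<and>
    (q012 * q120 * q300 - q012 * q210 * q210 - 2 * q021 * q111 * q300 + 2 * q021 * q201 * q210 + q030 * q102 * q300 - q030 * q201 * q201 - q102 * q120 * q210 + q111 * q111 * q210) = 0 \<and>
    (q003 * q120 * q300 - q003 * q210 * q210 - 2 * q012 * q111 * q300 + 2 * q012 * q201 * q210 + q021 * q102 * q300 - q021 * q201 * q201 - q102 * q120 * q201 + q111 * q111 * q201) = 0 \<and>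
    (q012 * q030 * q300 - q012 * q120 * q210 - q021 * q021 * q300 + 2 * q021 * q120 * q201 + q030 * q102 * q210 - 2 * q030 * q111 * q201 - q102 * q120 * q120 + q111 * q111 * q120) = 0 \<and>
    (q003 * q030 * q300 - q003 * q120 * q210 - q012 * q021 * q300 - 2 * q012 * q111 * q210 + 3 * q012 * q120 * q201 + 3 * q021 * q102 * q210 - 2 * q021 * q111 * q201 - q030 * q102 * q201 - 2 * q102 * q111 * q120 + 2 * q111 * q111 * q111) = 0 \<and>
    (q003 * q021 * q300 - 2 * q003 * q111 * q210 + q003 * q120 * q201 - q012 * q012 * q300 + 2 * q012 * q102 * q210 - q021 * q102 * q201 - q102 * q102 * q120 + q102 * q111 * q111) = 0 \<and>
    (q012 * q030 * q210 - q012 * q120 * q120 - q021 * q021 * q210 + 2 * q021 * q111 * q120 - q030 * q111 * q111) = 0 \<and>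
    (q003 * q030 * q210 - q003 * q120 * q120 - q012 * q021 * q210 + q012 * q030 * q201 - q021 * q021 * q201 + 2 * q021 * q102 * q120 + q021 * q111 * q111 - 2 * q030 * q102 * q111) = 0 \<and>
    (q003 * q021 * q210 + q003 * q030 * q201 - 2 * q003 * q111 * q120 - q012 * q012 * q210 - q012 * q021 * q201 + 2 * q012 * q102 * q120 + q012 * q111 * q111 - q030 * q102 * q102) = 0 \<and>
    (q003 * q021 * q201 - q003 * q111 * q111 - q012 * q012 * q201 + 2 * q012 * q102 * q111 - q021 * q102 * q102) = 0"




definition dt :: "'a::field^3 \<Rightarrow> 'a^3 \<Rightarrow> 'a" where
  "dt u v = u$1 * v$1 + u$2 * v$2 + u$3 * v$3"

lemma tau_mult: "tau (vector[dt r x1, dt r x2, dt r x3]) (vector[dt s x1, dt s x2, dt s x3])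
   (vector[dt u x1, dt u x2, dt u x3]) = tau r s u * tau x1 x2 x3"
  unfolding tau_def dt_def vector_3 by algebra

lemma F_dt: "sym3_eval phi a y w = dt (act2 phi a y) w"
  unfolding act2_def dt_def by (simp add: F_exp3[of phi a y w] mult_ac)

definition Qf where "Qf phi x y z a b c = tau (vector[sym3_eval phi a x x, sym3_eval phi a x y, sym3_eval phi a x z])
   (vector[sym3_eval phi b y x, sym3_eval phi b y y, sym3_eval phi b y z])
   (vector[sym3_eval phi c z x, sym3_eval phi c z y, sym3_eval phi c z z])"

lemma Qf_Dd: "Qf phi x y z a b c = Dd phi a b c x y z * tau x y z"
  unfolding Qf_def Dd_def F_dt[of phi _ _ x] F_dt[of phi _ _ y] F_dt[of phi _ _ z] tau_mult ..

lemma bridge: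
  fixes phi :: "(3 \<Rightarrow> nat) \<Rightarrow> 'a::field"
  assumes Z: "\<forall>X y1 y2 y3. Gamma phi X y1 y2 y3 = 0"
  shows "cps (sym3_eval phi x x x) (sym3_eval phi x x y) (sym3_eval phi x x z) (sym3_eval phi x y y)
    (sym3_eval phi x y z) (sym3_eval phi x z z) (sym3_eval phi y y y) (sym3_eval phi y y z)
    (sym3_eval phi y z z) (sym3_eval phi z z z)"
proof -
  have cn:
    "sym3_eval phi x y x = sym3_eval phi x x y"
    "sym3_eval phi x z x = sym3_eval phi x x z"
    "sym3_eval phi x z y = sym3_eval phi x y z"
    "sym3_eval phi y x x = sym3_eval phi x x y"
    "sym3_eval phi y x y = sym3_eval phi x y y"
    "sym3_eval phi y x z = sym3_eval phi x y z"
    "sym3_eval phi y y x = sym3_eval phi x y y"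
    "sym3_eval phi y z x = sym3_eval phi x y z"
    "sym3_eval phi y z y = sym3_eval phi y y z"
    "sym3_eval phi z x x = sym3_eval phi x x z"
    "sym3_eval phi z x y = sym3_eval phi x y z"
    "sym3_eval phi z x z = sym3_eval phi x z z"
    "sym3_eval phi z y x = sym3_eval phi x y z"
    "sym3_eval phi z y y = sym3_eval phi y y z"
    "sym3_eval phi z y z = sym3_eval phi y z z"
    "sym3_eval phi z z x = sym3_eval phi x z z"
    "sym3_eval phi z z y = sym3_eval phi y z z"
    by (metis F_sym12 F_sym23)+
  note W1' = W1[OF Z, of _ x y z] and W2' = W2[OF Z, of _ _ x y z] and W3' = W3[OF Z, of _ _ _ x y z]
  let ?Q = "Qf phi x y z"
  have h: "?Q x x x = 0" "?Q y y y = 0" "?Q z z z = 0"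
    "?Q x x y + ?Q x y x + ?Q y x x = 0"
    "?Q x x z + ?Q x z x + ?Q z x x = 0"
    "?Q y y x + ?Q y x y + ?Q x y y = 0"
    "?Q y y z + ?Q y z y + ?Q z y y = 0"
    "?Q z z x + ?Q z x z + ?Q x z z = 0"
    "?Q z z y + ?Q z y z + ?Q y z z = 0"
    "?Q x y z + ?Q x z y + ?Q y x z + ?Q y z x + ?Q z x y + ?Q z y x = 0"
    unfolding Qf_Dd
    using W1'[of x] W1'[of y] W1'[of z] W2'[of x y] W2'[of x z] W2'[of y x] W2'[of y z] W2'[of z x] W2'[of z y]
      W3'[of x y z]
    by (simp_all only: distrib_right[symmetric] mult_zero_left)
  show ?thesis
    unfolding cps_def
    apply (intro conjI)
    subgoal using h(1) unfolding Qf_def tau_def vector_3 cn by algebra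
    subgoal using h(4) unfolding Qf_def tau_def vector_3 cn by algebra
    subgoal using h(5) unfolding Qf_def tau_def vector_3 cn by algebra
    subgoal using h(6) unfolding Qf_def tau_def vector_3 cn by algebra
    subgoal using h(10) unfolding Qf_def tau_def vector_3 cn by algebra
    subgoal using h(8) unfolding Qf_def tau_def vector_3 cn by algebra
    subgoal using h(2) unfolding Qf_def tau_def vector_3 cn by algebra
    subgoal using h(7) unfolding Qf_def tau_def vector_3 cn by algebra
    subgoal using h(9) unfolding Qf_def tau_def vector_3 cn by algebra
    subgoal using h(3) unfolding Qf_def tau_def vector_3 cn by algebra
    done
qed


lemma kerAlg:
  assumes "cps q300 q210 q201 q120 q111 q102 q030 q021 q012 q003"
    and "q210 = 0" "q120 = 0" "q111 = 0" "q030 = 0" "q021 = 0"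
    and "q300 * q102 - q201 ^ 2 \<noteq> 0"
  shows "q012 = 0"
proof -
  have a: "q012 * q012 * q201 = 0" "q012 * q012 * q300 = 0"
    using assms(1-6) unfolding cps_def by simp_all
  show ?thesis
  proof (rule ccontr)
    assume "q012 \<noteq> 0"
    then have "q201 = 0" "q300 = 0" using a by simp_all
    then show False using assms(7) by simp
  qed
qed

lemma xyzAlg:
  fixes q300 q210 q201 q120 q111 q102 q030 q021 q012 q003 :: "'a::field"
  assumes "cps q300 q210 q201 q120 q111 q102 q030 q021 q012 q003"
    and "q300 = 0" "q210 = 0" "q201 = 0"
    and "q120 * q102 - q111 ^ 2 \<noteq> 0"
  shows "q120 = 0 \<and> q102 = 0 \<and> q111 \<noteq> 0 \<and> (2::'a) = 0 \<and> q030 = 0 \<and> q003 = 0 \<and> q021 = 0 \<and> q012 = 0"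
proof -
  note C = assms(1)[unfolded cps_def assms(2) assms(3) assms(4)]
  have c: "q120 * (q120 * q102 - q111 ^ 2) = 0" "q102 * (q120 * q102 - q111 ^ 2) = 0"
    using C by (elim conjE; algebra)+
  then have z: "q120 = 0" "q102 = 0" using assms(5) by simp_all
  then have q: "q111 \<noteq> 0" using assms(5) by simp
  note C2 = C[unfolded z]
  have d: "2 * (q111 * q111 * q111) = 0" "q030 * (q111 * q111) = 0" "q003 * (q111 * q111) = 0"
     "q021 * (q111 * q111) = 0" "q012 * (q111 * q111) = 0"
    using C2 by (elim conjE; algebra)+
  show ?thesis using z q d by simp
qed

definition row3 :: "(3 \<Rightarrow> 3 \<Rightarrow> 'a::field) \<Rightarrow> 3 \<Rightarrow> 'a^3" where
  "row3 m i = vector [m i 1, m i 2, m i 3]"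

definition cr :: "'a::field^3 \<Rightarrow> 'a^3 \<Rightarrow> 'a^3" where
  "cr u v = vector [u$2 * v$3 - u$3 * v$2, u$3 * v$1 - u$1 * v$3, u$1 * v$2 - u$2 * v$1]"

definition adjm :: "(3 \<Rightarrow> 3 \<Rightarrow> 'a::field) \<Rightarrow> 3 \<Rightarrow> 3 \<Rightarrow> 'a" where
  "adjm m s t = (if t = 1 then cr (row3 m 2) (row3 m 3) else if t = 2 then cr (row3 m 3) (row3 m 1)
     else cr (row3 m 1) (row3 m 2)) $ s"

definition detm :: "(3 \<Rightarrow> 3 \<Rightarrow> 'a::field) \<Rightarrow> 'a" where
  "detm m = tau (row3 m 1) (row3 m 2) (row3 m 3)"

definition bf :: "(3 \<Rightarrow> 3 \<Rightarrow> 'a::field) \<Rightarrow> 'a^3 \<Rightarrow> 'a^3 \<Rightarrow> 'a" where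
  "bf m a c = (\<Sum>i\<in>UNIV. \<Sum>j\<in>UNIV. a$i * c$j * m i j)"

definition sm :: "(3 \<Rightarrow> 3 \<Rightarrow> 'a) \<Rightarrow> bool" where
  "sm m \<longleftrightarrow> (\<forall>i j. m i j = m j i)"

lemma sm_eqs: "sm m \<Longrightarrow> m 2 1 = m 1 2 \<and> m 3 1 = m 1 3 \<and> m 3 2 = m 2 3"
  unfolding sm_def by metis

lemma adjm_vals: "adjm m 1 1 = m 2 2 * m 3 3 - m 2 3 * m 3 2"
   "adjm m 2 1 = m 2 3 * m 3 1 - m 2 1 * m 3 3"
   "adjm m 3 1 = m 2 1 * m 3 2 - m 2 2 * m 3 1"
   "adjm m 1 2 = m 3 2 * m 1 3 - m 3 3 * m 1 2"
   "adjm m 2 2 = m 3 3 * m 1 1 - m 3 1 * m 1 3"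
   "adjm m 3 2 = m 3 1 * m 1 2 - m 3 2 * m 1 1"
   "adjm m 1 3 = m 1 2 * m 2 3 - m 1 3 * m 2 2"
   "adjm m 2 3 = m 1 3 * m 2 1 - m 1 1 * m 2 3"
   "adjm m 3 3 = m 1 1 * m 2 2 - m 1 2 * m 2 1"
  by (simp_all add: adjm_def cr_def row3_def)

lemma detm_val: "detm m = m 1 1 * m 2 2 * m 3 3 + m 1 2 * m 2 3 * m 3 1 + m 1 3 * m 2 1 * m 3 2
     - m 1 1 * m 2 3 * m 3 2 - m 1 2 * m 2 1 * m 3 3 - m 1 3 * m 2 2 * m 3 1"
  by (simp add: detm_def tau_def row3_def)

lemma bf_val: "bf m a c = a$1 * c$1 * m 1 1 + a$1 * c$2 * m 1 2 + a$1 * c$3 * m 1 3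
  + a$2 * c$1 * m 2 1 + a$2 * c$2 * m 2 2 + a$2 * c$3 * m 2 3
  + a$3 * c$1 * m 3 1 + a$3 * c$2 * m 3 2 + a$3 * c$3 * m 3 3"
  by (simp add: bf_def sum_3)

lemma adjm_sym: assumes "sm m" shows "adjm m s t = adjm m t s"
  using sm_eqs[OF assms] exhaust_3[of s] exhaust_3[of t]
  by (auto simp: adjm_vals algebra_simps)

lemma R1:
  assumes "sm m" "detm m = 0"
  shows "bf m (\<chi> s. adjm m s r) w = 0"
proof -
  have e: "m 2 1 = m 1 2" "m 3 1 = m 1 3" "m 3 2 = m 2 3" using sm_eqs[OF assms(1)] by auto
  have d: "m 1 1 * m 2 2 * m 3 3 + m 1 2 * m 2 3 * m 1 3 + m 1 3 * m 1 2 * m 2 3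
     - m 1 1 * m 2 3 * m 2 3 - m 1 2 * m 1 2 * m 3 3 - m 1 3 * m 2 2 * m 1 3 = 0"
    using assms(2) unfolding detm_val e .
  have h1: "bf m (\<chi> s. adjm m s 1) w = 0"
    apply (simp add: bf_val adjm_vals e)
    using d apply algebra
    done
  have h2: "bf m (\<chi> s. adjm m s 2) w = 0"
    apply (simp add: bf_val adjm_vals e)
    using d apply algebra
    done
  have h3: "bf m (\<chi> s. adjm m s 3) w = 0"
    apply (simp add: bf_val adjm_vals e)
    using d apply algebra
    done
  show ?thesis using h1 h2 h3 exhaust_3[of r] by auto
qed

lemma R2:
  assumes "sm m" "detm m = 0"
  shows "bf n (\<chi> s. adjm m s r) (\<chi> s. adjm m s r) = adjm m r r * (\<Sum>s\<in>UNIV. \<Sum>t\<in>UNIV. n s t * adjm m s t)"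
proof -
  have e: "m 2 1 = m 1 2" "m 3 1 = m 1 3" "m 3 2 = m 2 3" using sm_eqs[OF assms(1)] by auto
  have d: "m 1 1 * m 2 2 * m 3 3 + m 1 2 * m 2 3 * m 1 3 + m 1 3 * m 1 2 * m 2 3
     - m 1 1 * m 2 3 * m 2 3 - m 1 2 * m 1 2 * m 3 3 - m 1 3 * m 2 2 * m 1 3 = 0"
    using assms(2) unfolding detm_val e .
  have h1: "bf n (\<chi> s. adjm m s 1) (\<chi> s. adjm m s 1) = adjm m 1 1 * (\<Sum>s\<in>UNIV. \<Sum>t\<in>UNIV. n s t * adjm m s t)"
    apply (simp add: bf_val adjm_vals e sum_3)
    using d apply algebra
    done
  have h2: "bf n (\<chi> s. adjm m s 2) (\<chi> s. adjm m s 2) = adjm m 2 2 * (\<Sum>s\<in>UNIV. \<Sum>t\<in>UNIV. n s t * adjm m s t)"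
    apply (simp add: bf_val adjm_vals e sum_3)
    using d apply algebra
    done
  have h3: "bf n (\<chi> s. adjm m s 3) (\<chi> s. adjm m s 3) = adjm m 3 3 * (\<Sum>s\<in>UNIV. \<Sum>t\<in>UNIV. n s t * adjm m s t)"
    apply (simp add: bf_val adjm_vals e sum_3)
    using d apply algebra
    done
  show ?thesis using h1 h2 h3 exhaust_3[of r] by auto
qed

lemma R3:
  assumes "sm m"
  shows "bf m a c * bf m b d - bf m a d * bf m b c =
    (\<Sum>s\<in>UNIV. \<Sum>t\<in>UNIV. (cr a b)$s * (cr c d)$t * adjm m s t)"
proof -
  have e: "m 2 1 = m 1 2" "m 3 1 = m 1 3" "m 3 2 = m 2 3" using sm_eqs[OF assms(1)] by auto
  show ?thesis
    by (simp add: bf_val adjm_vals e sum_3 cr_def) algebra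
qed

lemma R2b:
  assumes "sm m" "detm m = 0"
  shows "adjm m r r * (\<Sum>s\<in>UNIV. \<Sum>t\<in>UNIV. al$s * al$t * adjm m s t) = (\<Sum>s\<in>UNIV. al$s * adjm m s r)^2"
proof -
  have e: "m 2 1 = m 1 2" "m 3 1 = m 1 3" "m 3 2 = m 2 3" using sm_eqs[OF assms(1)] by auto
  have d: "m 1 1 * m 2 2 * m 3 3 + m 1 2 * m 2 3 * m 1 3 + m 1 3 * m 1 2 * m 2 3
     - m 1 1 * m 2 3 * m 2 3 - m 1 2 * m 1 2 * m 3 3 - m 1 3 * m 2 2 * m 1 3 = 0"
    using assms(2) unfolding detm_val e .
  have h1: "adjm m 1 1 * (\<Sum>s\<in>UNIV. \<Sum>t\<in>UNIV. al$s * al$t * adjm m s t) = (\<Sum>s\<in>UNIV. al$s * adjm m s 1)^2"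
    apply (simp add: adjm_vals e sum_3 power2_eq_square)
    using d apply algebra
    done
  have h2: "adjm m 2 2 * (\<Sum>s\<in>UNIV. \<Sum>t\<in>UNIV. al$s * al$t * adjm m s t) = (\<Sum>s\<in>UNIV. al$s * adjm m s 2)^2"
    apply (simp add: adjm_vals e sum_3 power2_eq_square)
    using d apply algebra
    done
  have h3: "adjm m 3 3 * (\<Sum>s\<in>UNIV. \<Sum>t\<in>UNIV. al$s * al$t * adjm m s t) = (\<Sum>s\<in>UNIV. al$s * adjm m s 3)^2"
    apply (simp add: adjm_vals e sum_3 power2_eq_square)
    using d apply algebra
    done
  show ?thesis using h1 h2 h3 exhaust_3[of r] by auto
qed

lemma RB:
  assumes "sm m" "detm m = 0" "\<And>r. adjm m r r = 0"
  shows "adjm m s t = 0"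
proof -
  have e: "m 2 1 = m 1 2" "m 3 1 = m 1 3" "m 3 2 = m 2 3" using sm_eqs[OF assms(1)] by auto
  have d: "m 1 1 * m 2 2 * m 3 3 + m 1 2 * m 2 3 * m 1 3 + m 1 3 * m 1 2 * m 2 3
     - m 1 1 * m 2 3 * m 2 3 - m 1 2 * m 1 2 * m 3 3 - m 1 3 * m 2 2 * m 1 3 = 0"
    using assms(2) unfolding detm_val e .
  have z: "m 2 2 * m 3 3 - m 2 3 * m 2 3 = 0" "m 3 3 * m 1 1 - m 1 3 * m 1 3 = 0" "m 1 1 * m 2 2 - m 1 2 * m 1 2 = 0"
    using assms(3)[of 1] assms(3)[of 2] assms(3)[of 3] by (simp_all add: adjm_vals e)
  have "adjm m 1 2 * adjm m 1 2 = 0" "adjm m 1 3 * adjm m 1 3 = 0" "adjm m 2 3 * adjm m 2 3 = 0"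
    unfolding adjm_vals e using d z by algebra+
  then have "adjm m 1 2 = 0" "adjm m 1 3 = 0" "adjm m 2 3 = 0" by simp_all
  moreover have "adjm m 2 1 = adjm m 1 2" "adjm m 3 1 = adjm m 1 3" "adjm m 3 2 = adjm m 2 3"
    using adjm_sym[OF assms(1)] by auto
  ultimately show ?thesis using assms(3) exhaust_3[of s] exhaust_3[of t] by auto
qed


lemma F_zero1: "sym3_eval phi 0 v w = 0"
  unfolding sym3_eval_def by simp

lemma F_exp2: "sym3_eval phi v u w = u$1 * sym3_eval phi v (axis 1 1) w + u$2 * sym3_eval phi v (axis 2 1) w
   + u$3 * sym3_eval phi v (axis 3 1) w"
  by (subst vec3_decomp[of u]) (simp add: F_add2 F_smult2)

definition matF :: "((3 \<Rightarrow> nat) \<Rightarrow> 'a::field) \<Rightarrow> 'a^3 \<Rightarrow> 3 \<Rightarrow> 3 \<Rightarrow> 'a" where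
  "matF phi x = (\<lambda>i j. sym3_eval phi x (axis i 1) (axis j 1))"

lemma sm_matF: "sm (matF phi x)"
  unfolding sm_def matF_def using F_sym23 by metis

lemma F_bf: "sym3_eval phi x a c = bf (matF phi x) a c"
  apply (subst F_exp2[of phi x a c])
  apply (subst F_exp3[of phi x "axis 1 1" c])
  apply (subst F_exp3[of phi x "axis 2 1" c])
  apply (subst F_exp3[of phi x "axis 3 1" c])
  by (simp add: bf_val matF_def algebra_simps)

lemma act2_row: "act2 phi x (axis i 1) = row3 (matF phi x) i"
  unfolding act2_def row3_def matF_def by (simp add: vec_eq_iff forall_3)

lemma Dd_det: "Dd phi x x x (axis 1 1) (axis 2 1) (axis 3 1) = detm (matF phi x)"
  unfolding Dd_def act2_row detm_def ..

lemma R4g: "tau (row3 m 1) (row3 m 2) (row3 n 3) + tau (row3 m 1) (row3 n 2) (row3 m 3)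
   + tau (row3 n 1) (row3 m 2) (row3 m 3) = (\<Sum>s\<in>UNIV. \<Sum>t\<in>UNIV. n s t * adjm m t s)"
  by (simp add: tau_def row3_def adjm_vals sum_3) algebra

lemma R4: "Dd phi x x v (axis 1 1) (axis 2 1) (axis 3 1) + Dd phi x v x (axis 1 1) (axis 2 1) (axis 3 1)
   + Dd phi v x x (axis 1 1) (axis 2 1) (axis 3 1)
   = (\<Sum>s\<in>UNIV. \<Sum>t\<in>UNIV. matF phi v s t * adjm (matF phi x) t s)"
  unfolding Dd_def act2_row R4g ..

lemma tau_cr_sum: "(\<Sum>s\<in>UNIV. (cr a c)$s * k$s) = tau a c k"
  by (simp add: sum_3 cr_def tau_def algebra_simps)

lemma span3:
  assumes "tau x y z \<noteq> 0"
  shows "\<exists>al be ga. v = al *s x + be *s y + ga *s z"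
proof -
  let ?d = "tau x y z"
  have c: "?d * v$1 = tau v y z * x$1 + tau x v z * y$1 + tau x y v * z$1"
    "?d * v$2 = tau v y z * x$2 + tau x v z * y$2 + tau x y v * z$2"
    "?d * v$3 = tau v y z * x$3 + tau x v z * y$3 + tau x y v * z$3"
    unfolding tau_def by algebra+
  have "v = (tau v y z / ?d) *s x + (tau x v z / ?d) *s y + (tau x y v / ?d) *s z"
    unfolding vec_eq_iff forall_3 using c assms by (simp add: field_simps)
  then show ?thesis by blast
qed

lemma ker_basis:
  assumes "tau x y z \<noteq> 0"
    and h: "\<And>a c. a \<in> {x,y,z} \<Longrightarrow> c \<in> {x,y,z} \<Longrightarrow> sym3_eval phi u a c = 0"
  shows "sym3_eval phi u a c = 0"
proof -
  obtain a1 a2 a3 where a: "a = a1 *s x + a2 *s y + a3 *s z" using span3[OF assms(1)] by blast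
  obtain c1 c2 c3 where c: "c = c1 *s x + c2 *s y + c3 *s z" using span3[OF assms(1)] by blast
  show ?thesis unfolding a c by (simp add: F_add2 F_smult2 F_add3 F_smult3 h)
qed


lemma kerLem:
  fixes phi :: "(3 \<Rightarrow> nat) \<Rightarrow> 'a::field"
  assumes Z: "\<forall>X y1 y2 y3. Gamma phi X y1 y2 y3 = 0"
    and K: "\<And>l. (\<And>i j. sym3_eval phi l (axis i 1) (axis j 1) = 0) \<Longrightarrow> l = 0"
    and d: "tau x y z \<noteq> 0"
    and h1: "\<And>w. sym3_eval phi x y w = 0" and h2: "\<And>w. sym3_eval phi y y w = 0"
    and mn: "sym3_eval phi x x x * sym3_eval phi x z z - (sym3_eval phi x x z)^2 \<noteq> 0"
  shows False
proof -
  let ?F = "sym3_eval phi"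
  have B: "cps (?F x x x) (?F x x y) (?F x x z) (?F x y y) (?F x y z) (?F x z z) (?F y y y) (?F y y z)
    (?F y z z) (?F z z z)" by (rule bridge[OF Z])
  have xxy: "?F x x y = 0" using h1[of x] F_sym23 by metis
  have yzz: "?F y z z = 0"
    by (rule kerAlg[OF B xxy h1 h1 h2 h2 mn])
  have yx: "?F y x w = 0" for w using h1[of w] F_sym12 by metis
  have yzx: "?F y z x = 0" using h1[of z] F_sym12 F_sym23 by metis
  have yzy: "?F y z y = 0" using h2[of z] F_sym23 by metis
  have "?F y a c = 0" for a c
    by (rule ker_basis[OF d]) (auto simp: yx h2 yzx yzy yzz)
  then have "y = 0" using K by blast
  then show False using d by (simp add: tau_def)
qed

lemma xyzLem:
  fixes phi :: "(3 \<Rightarrow> nat) \<Rightarrow> 'a::field"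
  assumes Z: "\<forall>X y1 y2 y3. Gamma phi X y1 y2 y3 = 0"
    and d: "tau x y z \<noteq> 0"
    and h: "\<And>w. sym3_eval phi x x w = 0"
    and mn: "sym3_eval phi x y y * sym3_eval phi x z z - (sym3_eval phi x y z)^2 \<noteq> 0"
  shows "CHAR('a) = 2 \<and> is_xyz phi"
proof -
  let ?F = "sym3_eval phi"
  have B: "cps (?F x x x) (?F x x y) (?F x x z) (?F x y y) (?F x y z) (?F x z z) (?F y y y) (?F y y z)
    (?F y z z) (?F z z z)" by (rule bridge[OF Z])
  note R = xyzAlg[OF B h h h mn]
  have z: "?F x y y = 0" "?F x z z = 0" "?F y y y = 0" "?F z z z = 0" "?F y y z = 0" "?F y z z = 0"
    and q: "?F x y z \<noteq> 0" and two: "(2::'a) = 0" using R by auto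
  have "of_nat 2 = (0::'a)" using two by simp
  then have dv: "CHAR('a) dvd 2" by (metis of_nat_eq_0_iff_char_dvd)
  have "CHAR('a) \<le> 2" by (rule dvd_imp_le[OF dv]) simp
  moreover have "CHAR('a) \<noteq> 0" using dv by (metis dvd_0_left_iff zero_neq_numeral)
  moreover have "CHAR('a) \<noteq> Suc 0" by (rule CHAR_not_1')
  ultimately have c2: "CHAR('a) = 2" by linarith
  have cn:
    "?F x y x = ?F x x y"
    "?F x z x = ?F x x z"
    "?F x z y = ?F x y z"
    "?F y x x = ?F x x y"
    "?F y x y = ?F x y y"
    "?F y x z = ?F x y z"
    "?F y y x = ?F x y y"
    "?F y z x = ?F x y z"
    "?F y z y = ?F y y z"
    "?F z x x = ?F x x z"
    "?F z x y = ?F x y z"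
    "?F z x z = ?F x z z"
    "?F z y x = ?F x y z"
    "?F z y y = ?F y y z"
    "?F z y z = ?F y z z"
    "?F z z x = ?F x z z"
    "?F z z y = ?F y z z"
    by (metis F_sym12 F_sym23)+
  define c where "c = ?F x y z"
  define b :: "'a^3^3" where "b = vector [(1/c) *s x, y, z]"
  have db: "det b \<noteq> 0" unfolding b_def det_vec3 tau_lin using d q by (simp add: c_def)
  have b1: "?F (b$1) (b$2) (b$3) = 1" unfolding b_def using q by (simp add: F_smult1 c_def)
  have b2: "\<forall>p q r. (p = q \<or> q = r \<or> p = r) \<longrightarrow> ?F (b$p) (b$q) (b$r) = 0"
  proof (intro allI impI)
    fix p q r :: 3
    assume "p = q \<or> q = r \<or> p = r"
    then show "?F (b$p) (b$q) (b$r) = 0"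
      using exhaust_3[of p] exhaust_3[of q] exhaust_3[of r]
      unfolding b_def
      by (elim disjE; simp add: F_smult1 F_smult2 F_smult3 cn z h)
  qed
  have "is_xyz phi" unfolding is_xyz_def using db b1 b2 by blast
  with c2 show ?thesis by simp
qed


lemma tau_axis3: "tau a b (axis i 1) = (cr a b)$i"
  using exhaust_3[of i] by (auto simp: tau_def cr_def axis_def algebra_simps)

lemma tau_swap23: "tau a c b = - tau a b c"
  by (simp add: tau_def algebra_simps)

theorem lemma8p2:
  fixes phi :: "(3 \<Rightarrow> nat) \<Rightarrow> 'a::field"
  assumes a: "CHAR('a) \<noteq> 2 \<or> (CHAR('a) = 2 \<and> \<not> is_xyz phi)"
    and b: "\<forall>l :: 'a^3. l \<noteq> 0 \<longrightarrow> act1 phi l \<noteq> (\<lambda>i j. 0)"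
  shows "\<exists>X y1 y2 y3. Gamma phi X y1 y2 y3 \<noteq> 0"
proof (rule ccontr)
  let ?F = "sym3_eval phi"
  let ?e1 = "axis 1 1 :: 'a^3" and ?e2 = "axis 2 1 :: 'a^3" and ?e3 = "axis 3 1 :: 'a^3"
  assume "\<not> (\<exists>X y1 y2 y3. Gamma phi X y1 y2 y3 \<noteq> 0)"
  then have Z: "\<forall>X y1 y2 y3. Gamma phi X y1 y2 y3 = 0" by auto
  have K: "l = 0" if "\<And>i j. ?F l (axis i 1) (axis j 1) = 0" for l
  proof (rule ccontr)
    assume "l \<noteq> 0"
    then have "act1 phi l \<noteq> (\<lambda>i j. 0)" using b by blast
    moreover have "act1 phi l = (\<lambda>i j. 0)" unfolding act1_def using that by (intro ext) simp
    ultimately show False by blast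
  qed
  have notxyz: "\<not> (CHAR('a) = 2 \<and> is_xyz phi)" using a by blast
  have dm: "detm (matF phi x) = 0" for x
    using W1[OF Z, of x ?e1 ?e2 ?e3] Dd_det[of phi x] by simp
  show False
  proof (cases "\<exists>x r. adjm (matF phi x) r r \<noteq> 0")
    case True
    then obtain x r where Kr: "adjm (matF phi x) r r \<noteq> 0" by blast
    define m where "m = matF phi x"
    define k :: "'a^3" where "k = (\<chi> s. adjm m s r)"
    have smm: "sm m" unfolding m_def by (rule sm_matF)
    have dmm: "detm m = 0" unfolding m_def by (rule dm)
    have Kr': "adjm m r r \<noteq> 0" using Kr by (simp add: m_def)
    have Fxk: "?F x k w = 0" for w
      unfolding F_bf m_def[symmetric] k_def by (rule R1[OF smm dmm])
    have adjsum: "(\<Sum>s\<in>UNIV. \<Sum>t\<in>UNIV. matF phi v s t * adjm m s t) = 0" for v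
    proof -
      have "(\<Sum>s\<in>UNIV. \<Sum>t\<in>UNIV. matF phi v s t * adjm m t s) = 0"
        using W2[OF Z, of x v ?e1 ?e2 ?e3] R4[of phi x v] by (simp add: m_def)
      then show ?thesis using adjm_sym[OF smm] by simp
    qed
    have Fvkk: "?F v k k = 0" for v
      unfolding F_bf k_def R2[OF smm dmm] adjsum by simp
    have Fkkw: "?F k k w = 0" for w using Fvkk[of w] F_sym12 F_sym23 by metis
    have minor: "adjm m r r * (?F x a a * ?F x c c - (?F x a c)^2) = (tau a c k)^2" for a c
    proof -
      have "?F x a a * ?F x c c - (?F x a c)^2 = bf m a a * bf m c c - bf m a c * bf m c a"
        unfolding m_def F_bf[symmetric] power2_eq_square using F_sym23 by metis
      also have "\<dots> = (\<Sum>s\<in>UNIV. \<Sum>t\<in>UNIV. (cr a c)$s * (cr a c)$t * adjm m s t)"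
        by (rule R3[OF smm])
      finally have "adjm m r r * (?F x a a * ?F x c c - (?F x a c)^2) = (\<Sum>s\<in>UNIV. (cr a c)$s * adjm m s r)^2"
        using R2b[OF smm dmm, of r "cr a c"] by simp
      also have "\<dots> = (tau a c k)^2" unfolding tau_cr_sum[symmetric] k_def by simp
      finally show ?thesis .
    qed
    show False
    proof (cases "cr x k = 0")
      case False
      then obtain i where i: "(cr x k)$i \<noteq> 0" by (metis vec_eq_iff zero_index)
      define z :: "'a^3" where "z = axis i 1"
      have d: "tau x k z \<noteq> 0" unfolding z_def tau_axis3 using i .
      have "(tau x z k)^2 \<noteq> 0" using d tau_swap23[of x z k] by simp
      then have mn: "?F x x x * ?F x z z - (?F x x z)^2 \<noteq> 0" using minor[of x z] by auto
      show False by (rule kerLem[OF Z K d Fxk Fkkw mn]) blast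
    next
      case True
      have c0: "x$2 * k$3 - x$3 * k$2 = 0" "x$3 * k$1 - x$1 * k$3 = 0" "x$1 * k$2 - x$2 * k$1 = 0"
        using arg_cong[OF True, of "\<lambda>v. v$1"] arg_cong[OF True, of "\<lambda>v. v$2"]
          arg_cong[OF True, of "\<lambda>v. v$3"] by (simp_all add: cr_def)
      have kr: "k$r = adjm m r r" unfolding k_def by simp
      have par: "k$r * x$j = x$r * k$j" for j
      proof -
        have c1: "x$2 * k$3 = x$3 * k$2" "x$3 * k$1 = x$1 * k$3" "x$1 * k$2 = x$2 * k$1"
          using c0 by simp_all
        show ?thesis using exhaust_3[of r] exhaust_3[of j] by (elim disjE; metis mult.commute c1)
      qed
      have par': "k$r *s x = x$r *s k" using par by (simp add: vec_eq_iff mult.commute)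
      have Fxx: "?F x x w = 0" for w
      proof -
        have "k$r * ?F x x w = ?F (k$r *s x) x w" by (simp add: F_smult1)
        also have "\<dots> = x$r * ?F k x w" unfolding par' by (simp add: F_smult1)
        also have "\<dots> = 0" using Fxk[of w] F_sym12[of phi k x w] by simp
        finally show ?thesis using Kr' kr by simp
      qed
      have xnz: "x \<noteq> 0"
      proof
        assume "x = 0"
        then have "m = (\<lambda>i j. 0)" unfolding m_def matF_def by (simp add: F_zero1)
        then show False using Kr' exhaust_3[of r] by (auto simp: adjm_vals)
      qed
      then obtain i where xi: "x$i \<noteq> 0" by (metis vec_eq_iff zero_index)
      have ki: "k$i \<noteq> 0" using par[of i] xi Kr' kr by auto
      have fin: False if d: "tau x y z \<noteq> 0" and t: "tau y z k \<noteq> 0" for y z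
      proof -
        have "(tau y z k)^2 \<noteq> 0" using t by simp
        then have mn: "?F x y y * ?F x z z - (?F x y z)^2 \<noteq> 0" using minor[of y z] by auto
        show False using xyzLem[OF Z d Fxx mn] notxyz by blast
      qed
      show False
        using exhaust_3[of i]
      proof (elim disjE)
        assume "i = 1"
        show False by (rule fin[of ?e2 ?e3]) (use xi ki \<open>i = 1\<close> in \<open>simp_all add: tau_def axis_def\<close>)
      next
        assume "i = 2"
        show False by (rule fin[of ?e3 ?e1]) (use xi ki \<open>i = 2\<close> in \<open>simp_all add: tau_def axis_def\<close>)
      next
        assume "i = 3"
        show False by (rule fin[of ?e1 ?e2]) (use xi ki \<open>i = 3\<close> in \<open>simp_all add: tau_def axis_def\<close>)
      qed
    qed
  next
    case False
    then have K0: "adjm (matF phi x) s t = 0" for x s t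
      using RB[OF sm_matF dm] by blast
    have Min: "?F x a c * ?F x b d - ?F x a d * ?F x b c = 0" for x a b c d
      unfolding F_bf R3[OF sm_matF] K0 by simp
    have e1nz: "?e1 \<noteq> 0" by (simp add: vec_eq_iff axis_def)
    then have "act1 phi ?e1 \<noteq> (\<lambda>i j. 0)" using b by blast
    then obtain i j where ij: "?F ?e1 (axis i 1) (axis j 1) \<noteq> 0"
      unfolding act1_def by (metis ext)
    define u :: "'a^3" where "u = ?e1"
    define w :: "'a^3" where "w = axis i 1"
    define bb :: "'a^3" where "bb = axis j 1"
    have ij': "?F u w bb \<noteq> 0" using ij by (simp add: u_def w_def bb_def)
    have "?F u w w * ?F u bb bb = ?F u w bb * ?F u w bb"
      using Min[of u w w bb bb] unfolding F_sym23[of phi u bb w] by algebra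
    then have Fuww: "?F u w w \<noteq> 0" using ij' by auto
    have "?F w w w * ?F w u u = ?F u w w * ?F u w w"
      using Min[of w w w u u] F_sym23[of phi w u w] F_sym12[of phi w u w] F_sym23[of phi w w u] F_sym12[of phi w w u]
      by (metis eq_iff_diff_eq_0)
    then have cnz: "?F w w w \<noteq> 0" using Fuww by auto
    define c where "c = ?F w w w"
    have key: "?F x v v' = 0" if gv: "?F w w v = 0" and gv': "?F w w v' = 0" for x v v'
    proof -
      have wvw: "?F w v w = 0" using gv F_sym23 by metis
      have m1: "?F w w w * ?F w v v' - ?F w w v' * ?F w v w = 0" by (rule Min)
      then have "c * ?F w v v' = 0" using gv' wvw by (simp add: c_def)
      then have wvv: "?F w v v' = 0" using cnz by (simp add: c_def)
      have m2: "?F x w w * ?F x v v' - ?F x w v' * ?F x v w = 0" by (rule Min)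
      have m3: "?F (w + x) w w * ?F (w + x) v v' - ?F (w + x) w v' * ?F (w + x) v w = 0" by (rule Min)
      then have "(c + ?F x w w) * ?F x v v' - ?F x w v' * ?F x v w = 0"
        unfolding F_add1 using wvv gv' wvw by (simp add: c_def)
      then have "c * ?F x v v' = 0" using m2 by algebra
      then show ?thesis using cnz by (simp add: c_def)
    qed
    define G where "G t = ?F w w (axis t 1)" for t
    have gexp: "?F w w v = v$1 * G 1 + v$2 * G 2 + v$3 * G 3" for v
      unfolding G_def by (rule F_exp3)
    define h :: "'a^3" where "h = (if G 1 \<noteq> 0 \<or> G 2 \<noteq> 0 then vector [G 2, - G 1, 0] else vector [G 3, 0, - G 1])"
    have gh: "?F w w h = 0" unfolding gexp h_def by (simp add: algebra_simps)
    have hnz: "h \<noteq> 0"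
    proof (cases "G 1 \<noteq> 0 \<or> G 2 \<noteq> 0")
      case True
      then show ?thesis unfolding h_def by (auto simp: vec_eq_iff forall_3)
    next
      case False
      then have "G 3 \<noteq> 0" using cnz gexp[of w] by auto
      then show ?thesis using False unfolding h_def by (auto simp: vec_eq_iff forall_3)
    qed
    have Fh: "?F h p q = 0" for p q
    proof -
      define p' where "p' = p - (?F w w p / c) *s w"
      define q' where "q' = q - (?F w w q / c) *s w"
      have gp: "?F w w p' = 0" unfolding p'_def F_diff3 F_smult3 using cnz by (simp add: c_def)
      have gq: "?F w w q' = 0" unfolding q'_def F_diff3 F_smult3 using cnz by (simp add: c_def)
      have pe: "p = p' + (?F w w p / c) *s w" unfolding p'_def by simp
      have qe: "q = q' + (?F w w q / c) *s w" unfolding q'_def by simp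
      have z1: "?F h p' q' = 0" by (rule key[OF gp gq])
      have z2: "?F h p' w = 0" using key[OF gh gp, of w] F_sym12 F_sym23 by metis
      have z3: "?F h w q' = 0" using key[OF gh gq, of w] F_sym12 by metis
      have z4: "?F h w w = 0" using gh F_sym12 F_sym23 by metis
      have "?F h p q = ?F h (p' + (?F w w p / c) *s w) (q' + (?F w w q / c) *s w)"
        using pe qe by simp
      also have "\<dots> = 0" by (simp add: F_add2 F_add3 F_smult2 F_smult3 z1 z2 z3 z4)
      finally show ?thesis .
    qed
    have "h = 0" by (rule K) (rule Fh)
    then show False using hnz by blast
  qed
qed

end
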